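(* Let $k\ge 3$, and let $p,q$ be real polynomials with $\deg p=k$, $\deg q=k-1$, whose roots are real, simple and strictly interlacing, $p_1<q_1<p_2<\dots<q_{k-1}<p_k$; let $R=q/p$. Fix $j\in\{1,\dots,k-1\}$ and let $C_j^+$ be the open upper half of the circle having $[p_j,p_{j+1}]$ as a diameter. Then $R$ is injective on $C_j^+$ and $R(C_j^+)\cap\mathbb{R}=\emptyset$; hence $R(C_j^+)\cup\{\infty\}$ is a simple closed loop in $\mathbb{C}P^1$ meeting $\mathbb{R}P^1$ only at $\infty$.
   Context: Here $p_1<\dots<p_k$ are the roots of $p$ and $q_1<\dots<q_{k-1}$ the roots of $q$. *)

theory Defs
  imports "HOL-Analysis.Analysis" "HOL-Computational_Algebra.Polynomial"
begin

definition ratfun :: "real poly \<Rightarrow> real poly \<Rightarrow> complex \<Rightarrow> complex" where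
  "ratfun q p z = poly (map_poly complex_of_real q) z / poly (map_poly complex_of_real p) z"

definition upper_semicircle :: "real \<Rightarrow> real \<Rightarrow> complex set" where
  "upper_semicircle a b =
     {z. cmod (z - complex_of_real ((a + b) / 2)) = (b - a) / 2 \<and> Im z > 0}"

end

theory Submission
  imports Defs
begin


lemma degree_linprod:
  fixes a :: "'b \<Rightarrow> 'a::field"
  assumes "finite I"
  shows "degree (\<Prod>i\<in>I. [:-a i, 1:]) = card I"
  using assms by (subst degree_prod_eq_sum_degree) auto

lemma lead_linprod:
  fixes a :: "'b \<Rightarrow> 'a::field"
  shows "lead_coeff (\<Prod>i\<in>I. [:-a i, 1:]) = 1"
  by (simp add: lead_coeff_prod)

lemma factor_lin:
  fixes a :: "'b \<Rightarrow> 'a::field" and P :: "'a poly"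
  assumes fin: "finite I" and inj: "inj_on a I" and deg: "degree P = card I"
    and roots: "\<And>i. i \<in> I \<Longrightarrow> poly P (a i) = 0"
  shows "P = smult (lead_coeff P) (\<Prod>i\<in>I. [:-a i, 1:])"
proof (rule poly_eqI_degree_lead_coeff[where n="card I" and A="a ` I"])
  show "coeff P (card I) = coeff (smult (lead_coeff P) (\<Prod>i\<in>I. [:-a i, 1:])) (card I)"
    using lead_linprod[of a I] degree_linprod[OF fin, of a] deg by simp
  show "card I \<le> card (a ` I)" using card_image[OF inj] by simp
  show "degree P \<le> card I" using deg by simp
  show "degree (smult (lead_coeff P) (\<Prod>i\<in>I. [:-a i, 1:])) \<le> card I"
    using degree_linprod[OF fin, of a] by simp
  fix z assume "z \<in> a ` I"
  then obtain i where i: "i \<in> I" "z = a i" by auto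
  have "poly (\<Prod>i\<in>I. [:-a i, 1:]) z = 0"
    unfolding poly_prod using i fin by (intro prod_zero bexI[of _ i]) auto
  then show "poly P z = poly (smult (lead_coeff P) (\<Prod>i\<in>I. [:-a i, 1:])) z"
    using roots i by simp
qed

lemma lagrange:
  fixes a :: "'b \<Rightarrow> 'a::field" and Q :: "'a poly"
  assumes fin: "finite I" and inj: "inj_on a I" and deg: "degree Q < card I"
  shows "Q = (\<Sum>i\<in>I. smult (poly Q (a i) / (\<Prod>l\<in>I-{i}. (a i - a l))) (\<Prod>l\<in>I-{i}. [:-a l, 1:]))"
proof (rule poly_eqI_degree[where A="a ` I"])
  show "card (a ` I) > degree Q" using card_image[OF inj] deg by simp
  have "degree (\<Sum>i\<in>I. smult (poly Q (a i) / (\<Prod>l\<in>I-{i}. (a i - a l))) (\<Prod>l\<in>I-{i}. [:-a l, 1:])) \<le> card I - 1"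
  proof (rule degree_sum_le[OF fin])
    fix i assume "i \<in> I"
    then show "degree (smult (poly Q (a i) / (\<Prod>l\<in>I-{i}. (a i - a l))) (\<Prod>l\<in>I-{i}. [:-a l, 1:])) \<le> card I - 1"
      using degree_linprod[of "I-{i}" a] fin by (simp add: degree_smult_le)
  qed
  then show "card (a ` I) > degree (\<Sum>i\<in>I. smult (poly Q (a i) / (\<Prod>l\<in>I-{i}. (a i - a l))) (\<Prod>l\<in>I-{i}. [:-a l, 1:]))"
    using card_image[OF inj] deg by simp
  fix z assume "z \<in> a ` I"
  then obtain j where j: "j \<in> I" "z = a j" by auto
  have "poly (\<Sum>i\<in>I. smult (poly Q (a i) / (\<Prod>l\<in>I-{i}. (a i - a l))) (\<Prod>l\<in>I-{i}. [:-a l, 1:])) z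
      = (\<Sum>i\<in>I. poly Q (a i) / (\<Prod>l\<in>I-{i}. (a i - a l)) * (\<Prod>l\<in>I-{i}. (a j - a l)))"
    by (simp add: poly_sum poly_prod j)
  also have "\<dots> = poly Q (a j) / (\<Prod>l\<in>I-{j}. (a j - a l)) * (\<Prod>l\<in>I-{j}. (a j - a l))"
    using fin j(1)
  proof (subst sum.remove[OF fin j(1)], subst sum.neutral)
    show "\<forall>i\<in>I - {j}. poly Q (a i) / (\<Prod>l\<in>I-{i}. (a i - a l)) * (\<Prod>l\<in>I-{i}. (a j - a l)) = 0"
    proof
      fix i assume i: "i \<in> I - {j}"
      have "(\<Prod>l\<in>I-{i}. (a j - a l)) = 0"
        using i j fin by (intro prod_zero bexI[of _ j]) auto
      then show "poly Q (a i) / (\<Prod>l\<in>I-{i}. (a i - a l)) * (\<Prod>l\<in>I-{i}. (a j - a l)) = 0" by simp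
    qed
  qed simp
  also have "\<dots> = poly Q z"
  proof -
    have "(\<Prod>l\<in>I-{j}. (a j - a l)) \<noteq> 0"
      using fin inj j(1) by (subst prod_zero_iff) (auto simp: inj_on_def)
    then show ?thesis using j by simp
  qed
  finally show "poly Q z = poly (\<Sum>i\<in>I. smult (poly Q (a i) / (\<Prod>l\<in>I-{i}. (a i - a l))) (\<Prod>l\<in>I-{i}. [:-a l, 1:])) z" ..
qed


lemma circ_eq:
  assumes "a < b" "z \<in> upper_semicircle a b"
  shows "(Re z - a)^2 + (Im z)^2 = (b - a) * (Re z - a)" "Im z > 0" "a < Re z" "Re z < b"
proof -
  from assms have c: "cmod (z - complex_of_real ((a + b) / 2)) = (b - a) / 2" and y: "Im z > 0"
    by (auto simp: upper_semicircle_def)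
  have "(cmod (z - complex_of_real ((a + b) / 2)))^2 = ((b - a) / 2)^2" by (simp only: c)
  then have "(Re z - (a+b)/2)^2 + (Im z)^2 = ((b - a) / 2)^2" by (simp add: cmod_power2)
  moreover have "(Re z - a)^2 + (Im z)^2 - (b - a) * (Re z - a) = (Re z - (a+b)/2)^2 + (Im z)^2 - ((b - a) / 2)^2"
    by (simp add: power2_eq_square field_simps)
  ultimately show e: "(Re z - a)^2 + (Im z)^2 = (b - a) * (Re z - a)" by simp
  show "Im z > 0" by fact
  have "(Re z - a) * (Re z - b) = -((Im z)^2)" using e by (simp add: power2_eq_square algebra_simps)
  also have "\<dots> < 0" using y by simp
  finally have "(Re z - a) * (Re z - b) < 0" .
  then show "a < Re z" "Re z < b" using assms(1) by (auto simp: mult_less_0_iff)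
qed

lemma geo:
  assumes ab: "a < b" and z: "z \<in> upper_semicircle a b" and w: "w \<in> upper_semicircle a b"
  shows "Im ((z - of_real a) * (w - of_real a) / ((z - of_real t) * (w - of_real t)))
       = Im ((z - of_real a) * (w - of_real a)) * (t - a) * (t - b) / (cmod ((z - of_real t) * (w - of_real t)))^2"
    "Im ((z - of_real a) * (w - of_real a)) > 0"
    "(z - of_real t) * (w - of_real t) \<noteq> 0"
proof -
  note cz = circ_eq[OF ab z] and cw = circ_eq[OF ab w]
  define x1 where "x1 = Re z"
  define y1 where "y1 = Im z"
  define x2 where "x2 = Re w"
  define y2 where "y2 = Im w"
  have E1: "(x1 - a)^2 + y1^2 - (b - a) * (x1 - a) = 0" using cz x1_def y1_def by simp
  have E2: "(x2 - a)^2 + y2^2 - (b - a) * (x2 - a) = 0" using cw x2_def y2_def by simp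
  define ReX where "ReX = (x1-t)*(x2-t) - y1*y2"
  define ImX where "ImX = (x1-t)*y2 + (x2-t)*y1"
  define ReV where "ReV = (x1-a)*(x2-a) - y1*y2"
  define ImV where "ImV = (x1-a)*y2 + (x2-a)*y1"
  have X: "Re ((z - of_real t) * (w - of_real t)) = ReX" "Im ((z - of_real t) * (w - of_real t)) = ImX"
    by (simp_all add: ReX_def ImX_def x1_def y1_def x2_def y2_def algebra_simps)
  have V: "Re ((z - of_real a) * (w - of_real a)) = ReV" "Im ((z - of_real a) * (w - of_real a)) = ImV"
    by (simp_all add: ReV_def ImV_def x1_def y1_def x2_def y2_def algebra_simps)
  have key: "ImV * ReX - ReV * ImX = ImV * (t - a) * (t - b) - (t - a) * (y2 * ((x1 - a)^2 + y1^2 - (b - a) * (x1 - a)) + y1 * ((x2 - a)^2 + y2^2 - (b - a) * (x2 - a)))"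
    unfolding ReX_def ImX_def ReV_def ImV_def by (simp add: power2_eq_square algebra_simps)
  then have key2: "ImV * ReX - ReV * ImX = ImV * (t - a) * (t - b)" using E1 E2 by simp
  have nz: "z - of_real t \<noteq> 0" "w - of_real t \<noteq> 0" using cz(2) cw(2)
    by (auto simp: complex_eq_iff)
  then show "(z - of_real t) * (w - of_real t) \<noteq> 0" by simp
  show "Im ((z - of_real a) * (w - of_real a)) > 0"
    using cz cw unfolding V ImV_def x1_def y1_def x2_def y2_def
    by (intro add_pos_pos mult_pos_pos) auto
  show "Im ((z - of_real a) * (w - of_real a) / ((z - of_real t) * (w - of_real t)))
       = Im ((z - of_real a) * (w - of_real a)) * (t - a) * (t - b) / (cmod ((z - of_real t) * (w - of_real t)))^2"
    unfolding Im_divide cmod_power2 X V using key2 by (simp add: algebra_simps)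
qed


lemma chain_less:
  fixes f :: "nat \<Rightarrow> real"
  assumes step: "\<And>i. 1 \<le> i \<Longrightarrow> i < n \<Longrightarrow> f i < f (Suc i)" and "1 \<le> i" "i < l" "l \<le> n"
  shows "f i < f l"
  using assms(3-)
proof (induction l)
  case 0 then show ?case by simp
next
  case (Suc l)
  show ?case
  proof (cases "i = l")
    case True then show ?thesis using step Suc.prems assms(2) by simp
  next
    case False
    then have "f i < f l" using Suc by simp
    also have "f l < f (Suc l)" using step Suc.prems False by simp
    finally show ?thesis .
  qed
qed

lemma epos:
  fixes pr qr :: "nat \<Rightarrow> real"
  assumes il: "\<forall>i\<in>{1..k-1}. pr i < qr i \<and> qr i < pr (i + 1)" and k: "k \<ge> 1" and i: "i \<in> {1..k}"
  shows "(\<Prod>m\<in>{1..k-1}. (pr i - qr m)) / (\<Prod>l\<in>{1..k}-{i}. (pr i - pr l)) > 0"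
proof -
  have step: "\<And>i. 1 \<le> i \<Longrightarrow> i < k \<Longrightarrow> pr i < pr (Suc i)"
    using il by force
  have mono: "pr x \<le> pr y" if "1 \<le> x" "x \<le> y" "y \<le> k" for x y
    using chain_less[of k pr x y, OF step] that by (cases "x = y") auto
  define h where "h m = (if m < i then m else m + 1)" for m
  have bij: "bij_betw h {1..k-1} ({1..k}-{i})"
  proof (rule bij_betw_imageI)
    show "inj_on h {1..k-1}" by (auto simp: inj_on_def h_def split: if_splits)
    show "h ` {1..k-1} = {1..k}-{i}"
    proof
      show "h ` {1..k-1} \<subseteq> {1..k}-{i}" using i by (auto simp: h_def)
      show "{1..k}-{i} \<subseteq> h ` {1..k-1}"
      proof
        fix l assume l: "l \<in> {1..k}-{i}"
        show "l \<in> h ` {1..k-1}"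
        proof (cases "l < i")
          case True then show ?thesis using l i by (intro image_eqI[of _ _ l]) (auto simp: h_def)
        next
          case False then show ?thesis using l i by (intro image_eqI[of _ _ "l - 1"]) (auto simp: h_def)
        qed
      qed
    qed
  qed
  have "(\<Prod>l\<in>{1..k}-{i}. (pr i - pr l)) = (\<Prod>m\<in>{1..k-1}. (pr i - pr (h m)))"
    using prod.reindex_bij_betw[OF bij, of "\<lambda>l. pr i - pr l"] by simp
  then have "(\<Prod>m\<in>{1..k-1}. (pr i - qr m)) / (\<Prod>l\<in>{1..k}-{i}. (pr i - pr l))
     = (\<Prod>m\<in>{1..k-1}. (pr i - qr m) / (pr i - pr (h m)))"
    by (simp add: prod_dividef)
  also have "\<dots> > 0"
  proof (rule prod_pos)
    fix m assume m: "m \<in> {1..k-1}"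
    then have im: "pr m < qr m" "qr m < pr (m+1)" using il by auto
    show "0 < (pr i - qr m) / (pr i - pr (h m))"
    proof (cases "m < i")
      case True
      then have "pr (m+1) \<le> pr i" using mono[of "m+1" i] i by auto
      then show ?thesis using True im by (simp add: h_def)
    next
      case False
      then have "pr i \<le> pr m" using mono[of i m] i m by auto
      then show ?thesis using False im by (intro divide_neg_neg) (auto simp: h_def)
    qed
  qed
  finally show ?thesis .
qed

theorem mainTheorem10:
  fixes p q :: "real poly" and k j :: nat and pr qr :: "nat \<Rightarrow> real"
  assumes "k \<ge> 3"
    and "degree p = k" and "degree q = k - 1"
    and "{x. poly p x = 0} = pr ` {1..k}"
    and "{x. poly q x = 0} = qr ` {1..k-1}"
    and "{z. poly (map_poly complex_of_real p) z = 0} = complex_of_real ` pr ` {1..k}"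
    and "{z. poly (map_poly complex_of_real q) z = 0} = complex_of_real ` qr ` {1..k-1}"
    and "\<forall>i\<in>{1..k}. order (pr i) p = 1"
    and "\<forall>i\<in>{1..k-1}. order (qr i) q = 1"
    and "\<forall>i\<in>{1..k-1}. pr i < qr i \<and> qr i < pr (i + 1)"
    and "j \<in> {1..k-1}"
  shows "inj_on (ratfun q p) (upper_semicircle (pr j) (pr (j + 1)))
     \<and> ratfun q p ` upper_semicircle (pr j) (pr (j + 1)) \<inter> \<real> = {}"
proof -
  note k3 = assms(1) and il = assms(10) and jJ = assms(11)
  define I where "I = {1..k}"
  define J where "J = {1..k-1}"
  define a where "a l = complex_of_real (pr l)" for l
  define b where "b m = complex_of_real (qr m)" for m
  define P where "P = map_poly complex_of_real p"
  define Q where "Q = map_poly complex_of_real q"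
  have finI: "finite I" and finJ: "finite J" by (auto simp: I_def J_def)
  have cardI: "card I = k" and cardJ: "card J = k - 1" by (auto simp: I_def J_def)
  have step: "\<And>i. 1 \<le> i \<Longrightarrow> i < k \<Longrightarrow> pr i < pr (Suc i)" using il by force
  have prless: "pr x < pr y" if "1 \<le> x" "x < y" "y \<le> k" for x y
    using chain_less[of k pr x y, OF step] that by auto
  have stepq: "\<And>i. 1 \<le> i \<Longrightarrow> i < k - 1 \<Longrightarrow> qr i < qr (Suc i)"
  proof -
    fix i assume "1 \<le> i" "i < k - 1"
    then have "qr i < pr (i+1)" "pr (i+1) < qr (i+1)" using il by auto
    then show "qr i < qr (Suc i)" by simp
  qed
  have qrless: "qr x < qr y" if "1 \<le> x" "x < y" "y \<le> k - 1" for x y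
    using chain_less[of "k-1" qr x y, OF stepq] that by auto
  have injA: "inj_on a I"
  proof (rule inj_onI)
    fix x y assume "x \<in> I" "y \<in> I" "a x = a y"
    then show "x = y" using prless[of x y] prless[of y x] by (cases x y rule: linorder_cases) (auto simp: I_def a_def)
  qed
  have injB: "inj_on b J"
  proof (rule inj_onI)
    fix x y assume "x \<in> J" "y \<in> J" "b x = b y"
    then show "x = y" using qrless[of x y] qrless[of y x] by (cases x y rule: linorder_cases) (auto simp: J_def b_def)
  qed
  have degP: "degree P = k" unfolding P_def using assms(2) by (subst degree_map_poly) auto
  have degQ: "degree Q = k - 1" unfolding Q_def using assms(3) by (subst degree_map_poly) auto
  have lcP: "lead_coeff P = complex_of_real (lead_coeff p)"
    using degP assms(2) by (simp add: P_def coeff_map_poly)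
  have lcQ: "lead_coeff Q = complex_of_real (lead_coeff q)"
    using degQ assms(3) by (simp add: Q_def coeff_map_poly)
  have pnz: "lead_coeff p \<noteq> 0" using assms(2) k3 by auto
  have qnz: "lead_coeff q \<noteq> 0"
  proof
    assume "lead_coeff q = 0"
    then have "q = 0" by (simp only: leading_coeff_0_iff)
    then show False using assms(3) k3 by simp
  qed
  have rootP: "poly P (a i) = 0" if "i \<in> I" for i
    using assms(6) that by (auto simp: P_def a_def I_def)
  have rootQ: "poly Q (b m) = 0" if "m \<in> J" for m
    using assms(7) that by (auto simp: Q_def b_def J_def)
  have PF: "P = smult (lead_coeff P) (\<Prod>i\<in>I. [:-a i, 1:])"
    by (rule factor_lin[OF finI injA]) (use degP cardI rootP in auto)
  have QF: "Q = smult (lead_coeff Q) (\<Prod>m\<in>J. [:-b m, 1:])"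
    by (rule factor_lin[OF finJ injB]) (use degQ cardJ rootQ in auto)
  have LG: "Q = (\<Sum>i\<in>I. smult (poly Q (a i) / (\<Prod>l\<in>I-{i}. (a i - a l))) (\<Prod>l\<in>I-{i}. [:-a l, 1:]))"
    by (rule lagrange[OF finI injA]) (use degQ cardI k3 in auto)
  define e where "e i = (\<Prod>m\<in>J. (pr i - qr m)) / (\<Prod>l\<in>I-{i}. (pr i - pr l))" for i
  have epos': "e i > 0" if "i \<in> I" for i
    unfolding e_def I_def J_def using epos[OF il _ that[unfolded I_def]] k3 by auto
  define \<kappa> where "\<kappa> = lead_coeff q / lead_coeff p"
  have knz: "\<kappa> \<noteq> 0" using pnz qnz by (simp add: \<kappa>_def)
  define S where "S z = (\<Sum>i\<in>I. complex_of_real (e i) / (z - a i))" for z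
  have coefQ: "poly Q (a i) / (\<Prod>l\<in>I-{i}. (a i - a l)) = complex_of_real (lead_coeff q * e i)" for i
  proof -
    have "poly Q (a i) = complex_of_real (lead_coeff q * (\<Prod>m\<in>J. (pr i - qr m)))"
      by (subst QF) (simp add: lcQ poly_prod a_def b_def)
    moreover have "(\<Prod>l\<in>I-{i}. (a i - a l)) = complex_of_real (\<Prod>l\<in>I-{i}. (pr i - pr l))"
      by (simp add: a_def)
    ultimately show ?thesis by (simp add: e_def)
  qed
  have nzI: "z - a i \<noteq> 0" if "Im z > 0" for z i
    using that by (auto simp: a_def complex_eq_iff)
  have RS: "ratfun q p z = complex_of_real \<kappa> * S z" if z: "Im z > 0" for z
  proof -
    have PZ: "poly P z = complex_of_real (lead_coeff p) * (\<Prod>l\<in>I. (z - a l))"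
      by (subst PF) (simp add: lcP poly_prod)
    have QZ: "poly Q z = (\<Sum>i\<in>I. complex_of_real (lead_coeff q * e i) * (\<Prod>l\<in>I-{i}. (z - a l)))"
      by (subst LG) (simp add: poly_sum poly_prod coefQ)
    have "ratfun q p z = (\<Sum>i\<in>I. complex_of_real (lead_coeff q * e i) * (\<Prod>l\<in>I-{i}. (z - a l))
            / (complex_of_real (lead_coeff p) * (\<Prod>l\<in>I. (z - a l))))"
      unfolding ratfun_def P_def[symmetric] Q_def[symmetric] PZ QZ by (simp add: sum_divide_distrib)
    also have "\<dots> = (\<Sum>i\<in>I. complex_of_real \<kappa> * (complex_of_real (e i) / (z - a i)))"
    proof (rule sum.cong[OF refl])
      fix i assume i: "i \<in> I"
      have pr: "(\<Prod>l\<in>I. (z - a l)) = (z - a i) * (\<Prod>l\<in>I-{i}. (z - a l))"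
        using finI i by (simp add: prod.remove)
      have nz1: "(\<Prod>l\<in>I-{i}. (z - a l)) \<noteq> 0" using finI nzI[OF z] by simp
      show "complex_of_real (lead_coeff q * e i) * (\<Prod>l\<in>I-{i}. (z - a l))
            / (complex_of_real (lead_coeff p) * (\<Prod>l\<in>I. (z - a l)))
          = complex_of_real \<kappa> * (complex_of_real (e i) / (z - a i))"
        unfolding pr using nz1 nzI[OF z, of i] pnz by (simp add: \<kappa>_def field_simps)
    qed
    also have "\<dots> = complex_of_real \<kappa> * S z" by (simp add: S_def sum_distrib_left)
    finally show ?thesis .
  qed
  have IneJ: "I \<noteq> {}" using k3 by (auto simp: I_def)
  define C where "C = upper_semicircle (pr j) (pr (j + 1))"
  have ab: "pr j < pr (j+1)" using jJ il by force
  have ImC: "Im z > 0" if "z \<in> C" for z using circ_eq[OF ab] that by (auto simp: C_def)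
  have part2: "ratfun q p z \<notin> \<real>" if z: "Im z > 0" for z
  proof -
    have "Im (S z) = (\<Sum>i\<in>I. - e i * Im z / ((Re (z - a i))^2 + (Im (z - a i))^2))"
      by (simp add: S_def Im_divide a_def)
    also have "\<dots> < 0"
    proof -
      have "0 < (\<Sum>i\<in>I. e i * Im z / ((Re (z - a i))^2 + (Im (z - a i))^2))"
      proof (rule sum_pos)
        fix i assume "i \<in> I"
        then show "0 < e i * Im z / ((Re (z - a i))^2 + (Im (z - a i))^2)"
          using epos' z by (intro divide_pos_pos mult_pos_pos) (auto simp: a_def intro: add_nonneg_pos)
      qed (use finI IneJ in auto)
      then show ?thesis by (simp add: sum_negf)
    qed
    finally have "Im (S z) \<noteq> 0" by simp
    then have "Im (ratfun q p z) \<noteq> 0" using RS[OF z] knz by simp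
    then show ?thesis by (simp add: complex_is_Real_iff)
  qed
  have part1: "inj_on (ratfun q p) C"
  proof (rule inj_onI, rule ccontr)
    fix z w assume zC: "z \<in> C" and wC: "w \<in> C" and eq: "ratfun q p z = ratfun q p w" and ne: "z \<noteq> w"
    have z: "Im z > 0" and w: "Im w > 0" using ImC zC wC by auto
    have Seq: "S z = S w" using eq RS[OF z] RS[OF w] knz by simp
    define T where "T = (\<Sum>i\<in>I. complex_of_real (e i) / ((z - a i) * (w - a i)))"
    have "S z - S w = (w - z) * T"
      unfolding S_def T_def sum_subtractf[symmetric] sum_distrib_left
    proof (rule sum.cong[OF refl])
      fix i assume "i \<in> I"
      show "complex_of_real (e i) / (z - a i) - complex_of_real (e i) / (w - a i) =
         (w - z) * (complex_of_real (e i) / ((z - a i) * (w - a i)))"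
        using nzI[OF z, of i] nzI[OF w, of i] by (simp add: field_simps)
    qed
    then have T0: "T = 0" using Seq ne by simp
    define V where "V = (z - complex_of_real (pr j)) * (w - complex_of_real (pr j))"
    have zs: "z \<in> upper_semicircle (pr j) (pr (j+1))" and ws: "w \<in> upper_semicircle (pr j) (pr (j+1))"
      using zC wC by (auto simp: C_def)
    note G = geo[OF ab zs ws]
    have "Im (V * T) = (\<Sum>i\<in>I. e i * Im (V / ((z - a i) * (w - a i))))"
      unfolding T_def sum_distrib_left Im_sum by (rule sum.cong[OF refl]) (simp add: Im_divide algebra_simps a_def)
    also have "\<dots> = (\<Sum>i\<in>I. e i * (Im V * (pr i - pr j) * (pr i - pr (j+1))
                 / (cmod ((z - a i) * (w - a i)))^2))"
      using G(1) by (simp add: V_def a_def)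
    also have "\<dots> > 0"
    proof -
      define i0 :: nat where "i0 = (if j \<ge> 2 then 1 else 3)"
      have i0I: "i0 \<in> I" using jJ k3 by (auto simp: i0_def I_def)
      have jk: "j + 1 \<le> k" "1 \<le> j" "j \<le> k" using jJ k3 by auto
      have sgn: "(pr i - pr j) * (pr i - pr (j+1)) \<ge> 0" if "i \<in> I" for i
      proof (cases "i \<le> j")
        case True
        then have "pr i \<le> pr j" using prless[of i j] that jk by (cases "i = j") (auto simp: I_def)
        moreover have "pr i < pr (j+1)" using prless[of i "j+1"] that jk True by (auto simp: I_def)
        ultimately show ?thesis by (intro mult_nonpos_nonpos) auto
      next
        case False
        then have "pr (j+1) \<le> pr i" using prless[of "j+1" i] that jk by (cases "i = j+1") (auto simp: I_def)
        moreover have "pr j < pr i" using prless[of j i] that jk False by (auto simp: I_def)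
        ultimately show ?thesis by (intro mult_nonneg_nonneg) auto
      qed
      have sgn0: "(pr i0 - pr j) * (pr i0 - pr (j+1)) > 0"
      proof (cases "j \<ge> 2")
        case True
        then have "pr 1 < pr j" "pr 1 < pr (j+1)" using prless[of 1 j] prless[of 1 "j+1"] jJ by auto
        then show ?thesis using True by (simp add: i0_def mult_neg_neg)
      next
        case False
        then have "j = 1" using jJ by auto
        then have "pr 1 < pr 3" "pr 2 < pr 3" using prless[of 1 3] prless[of 2 3] k3 by auto
        then show ?thesis using \<open>j = 1\<close> by (simp add: i0_def numeral_2_eq_2 numeral_3_eq_3)
      qed
      have den: "(cmod ((z - a i) * (w - a i)))^2 > 0" for i
        using nzI[OF z, of i] nzI[OF w, of i] by simp
      show ?thesis
      proof (rule sum_pos2[OF finI i0I])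
        show "0 < e i0 * (Im V * (pr i0 - pr j) * (pr i0 - pr (j+1)) / (cmod ((z - a i0) * (w - a i0)))^2)"
        proof -
          have "0 < Im V * ((pr i0 - pr j) * (pr i0 - pr (j+1)))"
            using G(2) sgn0 unfolding V_def by (rule mult_pos_pos)
          then have "0 < Im V * (pr i0 - pr j) * (pr i0 - pr (j+1))" by (simp only: mult.assoc)
          then show ?thesis using epos'[OF i0I] den[of i0] by (metis mult_pos_pos divide_pos_pos)
        qed
        fix i assume i: "i \<in> I"
        show "0 \<le> e i * (Im V * (pr i - pr j) * (pr i - pr (j+1)) / (cmod ((z - a i) * (w - a i)))^2)"
        proof -
          have "0 \<le> Im V * ((pr i - pr j) * (pr i - pr (j+1)))"
            using G(2) sgn[OF i] unfolding V_def by (metis less_imp_le mult_nonneg_nonneg)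
          then have "0 \<le> Im V * (pr i - pr j) * (pr i - pr (j+1))" by (simp only: mult.assoc)
          then show ?thesis using epos'[OF i] den[of i] by (metis less_imp_le mult_nonneg_nonneg divide_nonneg_pos)
        qed
      qed
    qed
    finally show False using T0 by simp
  qed
  show ?thesis using part1 part2 ImC unfolding C_def by blast
qed

end
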